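(* For $i=1,2$ let $\mathcal{D}_i=(\Omega_i,\mathcal{B}_i)$ be a supersimple $2$-$(n_i,4,\lambda_i)$ design satisfying property $(\triangle)$, such that $(\Omega_i,\mathcal{C}_i)$ is a regular two-graph where $\mathcal{C}_i$ is the set of collinear triples of $\mathcal{D}_i$, and $n_i>2\lambda_i+2$. Let $\infty_i\in\Omega_i$. If the derived graphs $\mathcal{G}_{\mathcal{D}_1,\infty_1}$ and $\mathcal{G}_{\mathcal{D}_2,\infty_2}$ are isomorphic as graphs, then $\mathcal{D}_1$ and $\mathcal{D}_2$ are isomorphic as designs.
   Context: A $2$-$(n,4,\lambda)$ design $(\Omega,\mathcal{B})$: $n$ points, a multiset of $4$-subsets (lines), every $2$-subset in exactly $\lambda$ lines; supersimple: distinct lines meet in at most two points. Property $(\triangle)$: if $B_1,B_2\in\mathcal{B}$ with $|B_1\cap B_2|=2$ then $B_1\triangle B_2\in\mathcal{B}$. Collinear triple: $3$-subset contained in a line. Regular two-graph: $(\Omega,\mathcal{C})$ is a $2$-$(n,3,\mu)$ design with every $4$-subset containing $0,2$ or $4$ members of $\mathcal{C}$. The derived graph $\mathcal{G}_{\mathcal{D},\infty}$ has vertex set $\Omega\setminus\{\infty\}$, with $a,b$ adjacent iff $\{\infty,a,b\}\in\mathcal{C}$. Two designs are isomorphic if there is a bijection between point sets mapping the lines of one onto the lines of the other. *)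

theory Defs
  imports Main "HOL-Library.Multiset"
begin

definition design_2_4 :: "'a set \<Rightarrow> 'a set multiset \<Rightarrow> nat \<Rightarrow> nat \<Rightarrow> bool" where
  "design_2_4 \<Omega> \<B> n lam \<longleftrightarrow>
     finite \<Omega> \<and> card \<Omega> = n \<and>
     (\<forall>B \<in># \<B>. B \<subseteq> \<Omega> \<and> card B = 4) \<and>
     (\<forall>P. P \<subseteq> \<Omega> \<longrightarrow> card P = 2 \<longrightarrow> size (filter_mset (\<lambda>B. P \<subseteq> B) \<B>) = lam)"

definition supersimple :: "'a set multiset \<Rightarrow> bool" where
  "supersimple \<B> \<longleftrightarrow>
     (\<forall>B \<in># \<B>. count \<B> B = 1) \<and>
     (\<forall>B1 \<in># \<B>. \<forall>B2 \<in># \<B>. B1 \<noteq> B2 \<longrightarrow> card (B1 \<inter> B2) \<le> 2)"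

definition prop_triangle :: "'a set multiset \<Rightarrow> bool" where
  "prop_triangle \<B> \<longleftrightarrow>
     (\<forall>B1 \<in># \<B>. \<forall>B2 \<in># \<B>. card (B1 \<inter> B2) = 2 \<longrightarrow> (B1 - B2) \<union> (B2 - B1) \<in># \<B>)"

definition collinear_triples :: "'a set \<Rightarrow> 'a set multiset \<Rightarrow> 'a set set" where
  "collinear_triples \<Omega> \<B> = {T. T \<subseteq> \<Omega> \<and> card T = 3 \<and> (\<exists>B \<in># \<B>. T \<subseteq> B)}"

definition regular_two_graph :: "'a set \<Rightarrow> 'a set set \<Rightarrow> bool" where
  "regular_two_graph \<Omega> \<C> \<longleftrightarrow>
     finite \<Omega> \<and> (\<forall>T \<in> \<C>. T \<subseteq> \<Omega> \<and> card T = 3) \<and>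
     (\<exists>mu::nat. \<forall>P. P \<subseteq> \<Omega> \<longrightarrow> card P = 2 \<longrightarrow> card {T \<in> \<C>. P \<subseteq> T} = mu) \<and>
     (\<forall>Q. Q \<subseteq> \<Omega> \<longrightarrow> card Q = 4 \<longrightarrow> card {T \<in> \<C>. T \<subseteq> Q} \<in> {0, 2, 4})"

definition derived_adj :: "'a set \<Rightarrow> 'a set multiset \<Rightarrow> 'a \<Rightarrow> 'a \<Rightarrow> 'a \<Rightarrow> bool" where
  "derived_adj \<Omega> \<B> x a b \<longleftrightarrow> {x, a, b} \<in> collinear_triples \<Omega> \<B>"

definition graph_iso ::
  "'a set \<Rightarrow> ('a \<Rightarrow> 'a \<Rightarrow> bool) \<Rightarrow> 'b set \<Rightarrow> ('b \<Rightarrow> 'b \<Rightarrow> bool) \<Rightarrow> bool" where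
  "graph_iso V1 E1 V2 E2 \<longleftrightarrow>
     (\<exists>g. bij_betw g V1 V2 \<and> (\<forall>a \<in> V1. \<forall>b \<in> V1. E1 a b \<longleftrightarrow> E2 (g a) (g b)))"

definition derived_graphs_iso ::
  "'a set \<Rightarrow> 'a set multiset \<Rightarrow> 'a \<Rightarrow> 'b set \<Rightarrow> 'b set multiset \<Rightarrow> 'b \<Rightarrow> bool" where
  "derived_graphs_iso \<Omega>1 \<B>1 i1 \<Omega>2 \<B>2 i2 \<longleftrightarrow>
     graph_iso (\<Omega>1 - {i1}) (derived_adj \<Omega>1 \<B>1 i1) (\<Omega>2 - {i2}) (derived_adj \<Omega>2 \<B>2 i2)"

definition designs_iso :: "'a set \<Rightarrow> 'a set multiset \<Rightarrow> 'b set \<Rightarrow> 'b set multiset \<Rightarrow> bool" where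
  "designs_iso \<Omega>1 \<B>1 \<Omega>2 \<B>2 \<longleftrightarrow>
     (\<exists>f. bij_betw f \<Omega>1 \<Omega>2 \<and> image_mset (image f) \<B>1 = \<B>2)"

end

theory Submission
  imports Defs
begin

lemma line_sub: "design_2_4 \<Omega> \<B> n lam \<Longrightarrow> L \<in># \<B> \<Longrightarrow> L \<subseteq> \<Omega> \<and> card L = 4"
  unfolding design_2_4_def by blast

lemma in_C: assumes "design_2_4 \<Omega> \<B> n lam" "L \<in># \<B>" "T \<subseteq> L" "card T = 3"
  shows "T \<in> collinear_triples \<Omega> \<B>"
  using line_sub[OF assms(1,2)] assms(2-4) unfolding collinear_triples_def by blast

lemma C_line: "T \<in> collinear_triples \<Omega> \<B> \<Longrightarrow> \<exists>L. L \<in># \<B> \<and> T \<subseteq> L"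
  unfolding collinear_triples_def by blast

lemma card3: "x \<noteq> y \<Longrightarrow> x \<noteq> z \<Longrightarrow> y \<noteq> z \<Longrightarrow> card {x,y,z} = 3"
  by auto

lemma line_meet:
  assumes "supersimple \<B>" "L \<in># \<B>" "L' \<in># \<B>" "L \<noteq> L'"
  shows "card (L \<inter> L') \<le> 2"
  using assms unfolding supersimple_def by blast

lemma line_ext:
  assumes "design_2_4 \<Omega> \<B> n lam" "L \<in># \<B>" "{x,y,z} \<subseteq> L" "x \<noteq> y" "x \<noteq> z" "y \<noteq> z"
  shows "\<exists>t. L = {x,y,z,t} \<and> t \<notin> {x,y,z}"
proof -
  have L: "finite L" "card L = 4" using line_sub[OF assms(1,2)] assms(1) unfolding design_2_4_def
    by (auto intro: finite_subset)
  have "card (L - {x,y,z}) = 1"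
    using L assms(3-6) by (simp add: card_Diff_subset)
  then obtain t where t: "L - {x,y,z} = {t}" by (meson card_1_singletonE)
  hence "L = {x,y,z,t}" using assms(3) by blast
  moreover have "t \<notin> {x,y,z}" using t by blast
  ultimately show ?thesis by blast
qed


lemma sub4:
  assumes d: "p \<noteq> q" "p \<noteq> r" "p \<noteq> s" "q \<noteq> r" "q \<noteq> s" "r \<noteq> s"
    and T: "T \<subseteq> {p,q,r,s}" "card T = 3"
  shows "T \<in> {{p,q,r},{p,q,s},{p,r,s},{q,r,s}}"
proof -
  have c4: "card {p,q,r,s} = 4" using d by auto
  have "\<exists>x. x \<in> {p,q,r,s} - T"
  proof (rule ccontr)
    assume "\<not> ?thesis" hence "T = {p,q,r,s}" using T by blast
    thus False using T c4 by simp
  qed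
  then obtain x where x: "x \<in> {p,q,r,s}" "x \<notin> T" by blast
  have sub: "T \<subseteq> {p,q,r,s} - {x}" using T x by blast
  have "card ({p,q,r,s} - {x}) = 3" using c4 x by (simp add: card_Diff_singleton)
  hence TT: "T = {p,q,r,s} - {x}" using sub T by (metis card_subset_eq finite.emptyI finite.insertI finite_Diff)
  from x have "x = p \<or> x = q \<or> x = r \<or> x = s" by blast
  thus ?thesis
  proof (elim disjE)
    assume "x = p" hence "T = {q,r,s}" using TT d by blast thus ?thesis by simp
  next
    assume "x = q" hence "T = {p,r,s}" using TT d by blast thus ?thesis by simp
  next
    assume "x = r" hence "T = {p,q,s}" using TT d by blast thus ?thesis by simp
  next
    assume "x = s" hence "T = {p,q,r}" using TT d by blast thus ?thesis by simp
  qed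
qed

lemma neqI: "x \<in> B \<Longrightarrow> x \<notin> A \<Longrightarrow> A \<noteq> B" by blast

lemma card_filter_sum: "finite A \<Longrightarrow> card {x\<in>A. P x} = (\<Sum>x\<in>A. if P x then 1 else (0::nat))"
  by (simp add: sum.If_cases Int_def)

lemma bool4: "(if a then 1 else 0) + ((if b then 1 else 0) + ((if c then 1 else 0) + (if d then 1 else (0::nat)))) \<in> {0,2,4} \<Longrightarrow> (a=b) = (c=d)"
  by (cases a; cases b; cases c; cases d) auto

lemma parity:
  assumes rtg: "regular_two_graph \<Omega> \<C>"
    and in\<Omega>: "p \<in> \<Omega>" "q \<in> \<Omega>" "r \<in> \<Omega>" "s \<in> \<Omega>"
    and d: "p \<noteq> q" "p \<noteq> r" "p \<noteq> s" "q \<noteq> r" "q \<noteq> s" "r \<noteq> s"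
  shows "(({p,q,r}\<in>\<C>) = ({p,q,s}\<in>\<C>)) = (({p,r,s}\<in>\<C>) = ({q,r,s}\<in>\<C>))"
proof -
  let ?Q = "{p,q,r,s}"
  let ?X = "{{p,q,r},{p,q,s},{p,r,s},{q,r,s}}"
  have c4: "card ?Q = 4" using d by simp
  have sQ: "?Q \<subseteq> \<Omega>" using in\<Omega> by simp
  have ev: "card {T \<in> \<C>. T \<subseteq> ?Q} \<in> {0,2,4}"
    using rtg c4 sQ unfolding regular_two_graph_def by blast
  have c3: "\<And>T. T \<in> \<C> \<Longrightarrow> card T = 3" using rtg unfolding regular_two_graph_def by blast
  have eq: "{T \<in> \<C>. T \<subseteq> ?Q} = {T \<in> ?X. T \<in> \<C>}"
  proof (rule set_eqI, rule iffI)
    fix T assume "T \<in> {T \<in> \<C>. T \<subseteq> ?Q}"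
    hence "T \<in> \<C>" "T \<subseteq> ?Q" by auto
    moreover have "T \<in> ?X" using sub4[OF d \<open>T \<subseteq> ?Q\<close> c3[OF \<open>T \<in> \<C>\<close>]] .
    ultimately show "T \<in> {T \<in> ?X. T \<in> \<C>}" by blast
  next
    fix T assume "T \<in> {T \<in> ?X. T \<in> \<C>}"
    hence "T \<in> ?X" "T \<in> \<C>" by auto
    moreover have "T \<subseteq> ?Q" using \<open>T \<in> ?X\<close> by blast
    ultimately show "T \<in> {T \<in> \<C>. T \<subseteq> ?Q}" by blast
  qed
  have n1: "{p,q,r} \<noteq> {p,q,s}" by (rule neqI[where x=s]) (use d in auto)
  have n2: "{p,q,r} \<noteq> {p,r,s}" by (rule neqI[where x=s]) (use d in auto)
  have n3: "{p,q,r} \<noteq> {q,r,s}" by (rule neqI[where x=s]) (use d in auto)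
  have n4: "{p,q,s} \<noteq> {p,r,s}" by (rule neqI[where x=r]) (use d in auto)
  have n5: "{p,q,s} \<noteq> {q,r,s}" by (rule neqI[where x=r]) (use d in auto)
  have n6: "{p,r,s} \<noteq> {q,r,s}" by (rule neqI[where x=q]) (use d in auto)
  define f where "f = (\<lambda>T. if T \<in> \<C> then 1 else (0::nat))"
  have "card {T \<in> ?X. T \<in> \<C>} = (\<Sum>T\<in>?X. f T)"
    unfolding f_def by (rule card_filter_sum) simp
  also have "\<dots> = f {p,q,r} + (f {p,q,s} + (f {p,r,s} + f {q,r,s}))"
    apply (subst sum.insert) apply simp using n1 n2 n3 apply blast
    apply (subst sum.insert) apply simp using n4 n5 apply blast
    apply (subst sum.insert) apply simp using n6 apply blast
    by simp
  finally have calc: "card {T \<in> ?X. T \<in> \<C>} = f {p,q,r} + (f {p,q,s} + (f {p,r,s} + f {q,r,s}))" .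
  have "f {p,q,r} + (f {p,q,s} + (f {p,r,s} + f {q,r,s})) \<in> {0,2,4}"
    using ev unfolding eq calc .
  thus ?thesis unfolding f_def by (rule bool4)
qed


lemma cp:
  assumes D: "design_2_4 \<Omega> \<B> n lam" "supersimple \<B>" "prop_triangle \<B>"
    and L: "L \<in># \<B>" "L = {x,y,u,v}"
    and d: "x \<noteq> y" "x \<noteq> u" "x \<noteq> v" "y \<noteq> u" "y \<noteq> v" "u \<noteq> v"
    and w: "w \<in> \<Omega>" "w \<notin> L" and T: "{w,x,y} \<in> collinear_triples \<Omega> \<B>"
  shows "{w,u,v} \<in> collinear_triples \<Omega> \<B>"
proof -
  obtain L' where L': "L' \<in># \<B>" "{w,x,y} \<subseteq> L'" using C_line[OF T] by blast
  have ne: "L \<noteq> L'" using L' w by blast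
  have le: "card (L \<inter> L') \<le> 2" using line_meet[OF D(2) L(1) L'(1) ne] .
  have fin: "finite L" using L(2) by simp
  have u: "u \<notin> L'"
  proof
    assume "u \<in> L'"
    hence "{x,y,u} \<subseteq> L \<inter> L'" using L L' by blast
    hence "card {x,y,u} \<le> card (L \<inter> L')" using fin by (intro card_mono) auto
    thus False using le d by simp
  qed
  have v: "v \<notin> L'"
  proof
    assume "v \<in> L'"
    hence "{x,y,v} \<subseteq> L \<inter> L'" using L L' by blast
    hence "card {x,y,v} \<le> card (L \<inter> L')" using fin by (intro card_mono) auto
    thus False using le d by simp
  qed
  have "L \<inter> L' = {x,y}" using L L' u v by blast
  hence c2: "card (L \<inter> L') = 2" using d by simp
  have "(L - L') \<union> (L' - L) \<in># \<B>" using D(3) L(1) L'(1) c2 unfolding prop_triangle_def by blast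
  moreover have "{u,v,w} \<subseteq> (L - L') \<union> (L' - L)" using L L' u v w by blast
  moreover have "card {u,v,w} = 3" using d w L by auto
  ultimately have "{u,v,w} \<in> collinear_triples \<Omega> \<B>" using in_C[OF D(1)] by blast
  moreover have "{u,v,w} = {w,u,v}" by blast
  ultimately show ?thesis by simp
qed

definition Pc :: "'a set \<Rightarrow> 'a set multiset \<Rightarrow> 'a \<Rightarrow> 'a \<Rightarrow> 'a \<Rightarrow> 'a \<Rightarrow> bool" where
  "Pc \<Omega> \<B> i a b z \<longleftrightarrow> z \<in> \<Omega> - {i} \<and> z \<noteq> a \<and> z \<noteq> b \<and> derived_adj \<Omega> \<B> i a z \<and> derived_adj \<Omega> \<B> i b z \<and>
     (\<forall>w \<in> \<Omega> - {i,a,b,z}. derived_adj \<Omega> \<B> i w z \<longleftrightarrow> (derived_adj \<Omega> \<B> i w a \<longleftrightarrow> derived_adj \<Omega> \<B> i w b))"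

lemma adj_sym: "derived_adj \<Omega> \<B> i x y = derived_adj \<Omega> \<B> i y x"
  unfolding derived_adj_def by (simp add: insert_commute)

lemma charE:
  assumes D: "design_2_4 \<Omega> \<B> n lam" "supersimple \<B>" "prop_triangle \<B>"
    "regular_two_graph \<Omega> (collinear_triples \<Omega> \<B>)"
    and L: "L \<in># \<B>" "L = {i,a,b,c}"
    and d: "i \<noteq> a" "i \<noteq> b" "i \<noteq> c" "a \<noteq> b" "a \<noteq> c" "b \<noteq> c"
  shows "Pc \<Omega> \<B> i a b c"
proof -
  let ?C = "collinear_triples \<Omega> \<B>"
  have sub: "L \<subseteq> \<Omega>" using line_sub[OF D(1) L(1)] by blast
  hence inO: "i \<in> \<Omega>" "a \<in> \<Omega>" "b \<in> \<Omega>" "c \<in> \<Omega>" using L by auto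
  have ac: "derived_adj \<Omega> \<B> i a c" unfolding derived_adj_def
    by (rule in_C[OF D(1) L(1)]) (use L d in auto)
  have bc: "derived_adj \<Omega> \<B> i b c" unfolding derived_adj_def
    by (rule in_C[OF D(1) L(1)]) (use L d in auto)
  have iab: "{i,a,b} \<in> ?C" by (rule in_C[OF D(1) L(1)]) (use L d in auto)
  have L2: "L = {i,c,a,b}" "L = {a,b,i,c}" using L by auto
  have "\<forall>w \<in> \<Omega> - {i,a,b,c}. derived_adj \<Omega> \<B> i w c \<longleftrightarrow> (derived_adj \<Omega> \<B> i w a \<longleftrightarrow> derived_adj \<Omega> \<B> i w b)"
  proof
    fix w assume w: "w \<in> \<Omega> - {i,a,b,c}"
    have wL: "w \<notin> L" using w L by auto
    have e1: "{w,i,c} = {i,w,c}" by blast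
    have "{w,i,c} \<in> ?C \<longleftrightarrow> {w,a,b} \<in> ?C"
    proof
      assume h: "{w,i,c} \<in> ?C" show "{w,a,b} \<in> ?C"
        by (rule cp[OF D(1-3) L(1) L2(1) _ _ _ _ _ _ _ wL h]) (use d w in auto)
    next
      assume h: "{w,a,b} \<in> ?C" show "{w,i,c} \<in> ?C"
        by (rule cp[OF D(1-3) L(1) L2(2) _ _ _ _ _ _ _ wL h]) (use d w in auto)
    qed
    moreover have "(({i,w,a}\<in>?C) = ({i,w,b}\<in>?C)) = (({i,a,b}\<in>?C) = ({w,a,b}\<in>?C))"
      by (rule parity[OF D(4)]) (use inO w d in auto)
    ultimately show "derived_adj \<Omega> \<B> i w c \<longleftrightarrow> (derived_adj \<Omega> \<B> i w a \<longleftrightarrow> derived_adj \<Omega> \<B> i w b)"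
      unfolding derived_adj_def using iab e1 by auto
  qed
  thus ?thesis unfolding Pc_def using inO d ac bc by blast
qed


lemma card_set_mset_le: "card (set_mset M) \<le> size M"
proof -
  have "size (mset_set (set_mset M)) \<le> size M"
    by (rule size_mset_mono[OF mset_set_set_mset_msubset])
  thus ?thesis by simp
qed

lemma nofull:
  assumes D: "design_2_4 \<Omega> \<B> n lam" and nl: "n > 2 * lam + 2"
    and it: "i \<in> \<Omega>" "t \<in> \<Omega>" "t \<noteq> i"
    and full: "\<forall>w \<in> \<Omega> - {i,t}. {i,t,w} \<in> collinear_triples \<Omega> \<B>"
  shows False
proof -
  let ?F = "filter_mset (\<lambda>B. {i,t} \<subseteq> B) \<B>"
  have fin: "finite \<Omega>" "card \<Omega> = n" using D unfolding design_2_4_def by auto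
  have sF: "size ?F = lam"
  proof -
    have "{i,t} \<subseteq> \<Omega>" "card {i,t} = 2" using it by auto
    thus ?thesis using D unfolding design_2_4_def by blast
  qed
  have cov: "\<Omega> - {i,t} \<subseteq> (\<Union>L\<in>set_mset ?F. L - {i,t})"
  proof
    fix w assume w: "w \<in> \<Omega> - {i,t}"
    then obtain L where "L \<in># \<B>" "{i,t,w} \<subseteq> L" using C_line full by blast
    thus "w \<in> (\<Union>L\<in>set_mset ?F. L - {i,t})" using w by auto
  qed
  have c2: "\<And>L. L \<in> set_mset ?F \<Longrightarrow> card (L - {i,t}) = 2"
  proof -
    fix L assume "L \<in> set_mset ?F"
    hence "L \<in># \<B>" "{i,t} \<subseteq> L" by auto
    moreover have "finite L" "card L = 4" using line_sub[OF D \<open>L \<in># \<B>\<close>] fin(1)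
      by (auto intro: finite_subset)
    ultimately show "card (L - {i,t}) = 2" using it by (simp add: card_Diff_subset)
  qed
  have "card (\<Omega> - {i,t}) \<le> card (\<Union>L\<in>set_mset ?F. L - {i,t})"
  proof (rule card_mono[OF _ cov])
    show "finite (\<Union>L\<in>set_mset ?F. L - {i,t})"
      by (rule finite_subset[OF _ fin(1)]) (use line_sub[OF D] in auto)
  qed
  also have "\<dots> \<le> (\<Sum>L\<in>set_mset ?F. card (L - {i,t}))" by (rule card_UN_le) simp
  also have "\<dots> = 2 * card (set_mset ?F)" using c2 by simp
  also have "\<dots> \<le> 2 * lam" using card_set_mset_le[of ?F] sF by simp
  finally have "card (\<Omega> - {i,t}) \<le> 2 * lam" .
  moreover have "card (\<Omega> - {i,t}) = n - 2" using fin it by (simp add: card_Diff_subset)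
  ultimately show False using nl by simp
qed

lemma edge_line:
  assumes D: "design_2_4 \<Omega> \<B> n lam" "supersimple \<B>" "prop_triangle \<B>"
    "regular_two_graph \<Omega> (collinear_triples \<Omega> \<B>)"
    and e: "derived_adj \<Omega> \<B> i a b"
  shows "\<exists>t L. L \<in># \<B> \<and> L = {i,a,b,t} \<and> i \<noteq> a \<and> i \<noteq> b \<and> a \<noteq> b \<and> t \<notin> {i,a,b} \<and> Pc \<Omega> \<B> i a b t"
proof -
  have T: "{i,a,b} \<in> collinear_triples \<Omega> \<B>" using e unfolding derived_adj_def .
  hence c: "card {i,a,b} = 3" unfolding collinear_triples_def by blast
  have d: "i \<noteq> a" "i \<noteq> b" "a \<noteq> b"
    using c by (auto simp: card_insert_if split: if_splits)
  obtain L where L: "L \<in># \<B>" "{i,a,b} \<subseteq> L" using C_line[OF T] by blast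
  obtain t where t: "L = {i,a,b,t}" "t \<notin> {i,a,b}" using line_ext[OF D(1) L d] by blast
  have "Pc \<Omega> \<B> i a b t" by (rule charE[OF D L(1) t(1)]) (use d t in auto)
  thus ?thesis using L t d by blast
qed

lemma uniq:
  assumes D: "design_2_4 \<Omega> \<B> n lam" "supersimple \<B>" "prop_triangle \<B>"
    "regular_two_graph \<Omega> (collinear_triples \<Omega> \<B>)" and nl: "n > 2 * lam + 2"
    and i: "i \<in> \<Omega>" and ab: "a \<in> \<Omega> - {i}" "b \<in> \<Omega> - {i}"
    and P: "Pc \<Omega> \<B> i a b z" "Pc \<Omega> \<B> i a b z'"
  shows "z = z'"
proof (rule ccontr)
  assume ne: "z \<noteq> z'"
  let ?A = "derived_adj \<Omega> \<B> i"
  have z: "z \<in> \<Omega> - {i}" "z \<noteq> a" "z \<noteq> b" "?A a z" "?A b z"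
    "\<forall>w \<in> \<Omega> - {i,a,b,z}. ?A w z \<longleftrightarrow> (?A w a \<longleftrightarrow> ?A w b)"
    using P(1) unfolding Pc_def by auto
  have z': "z' \<in> \<Omega> - {i}" "z' \<noteq> a" "z' \<noteq> b" "?A a z'" "?A b z'"
    "\<forall>w \<in> \<Omega> - {i,a,b,z'}. ?A w z' \<longleftrightarrow> (?A w a \<longleftrightarrow> ?A w b)"
    using P(2) unfolding Pc_def by auto
  have "?A z' z" using z(6) z' ne adj_sym by (metis Diff_iff insertE singletonD insertI1)
  hence e: "?A z z'" using adj_sym by metis
  have same: "\<forall>w \<in> \<Omega> - {i,z,z'}. ?A w z = ?A w z'"
  proof
    fix w assume w: "w \<in> \<Omega> - {i,z,z'}"
    show "?A w z = ?A w z'"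
    proof (cases "w = a \<or> w = b")
      case True thus ?thesis using z z' adj_sym by metis
    next
      case False
      hence "w \<in> \<Omega> - {i,a,b,z}" "w \<in> \<Omega> - {i,a,b,z'}" using w by auto
      thus ?thesis using z(6) z'(6) by blast
    qed
  qed
  obtain t L where tL: "L \<in># \<B>" "L = {i,z,z',t}" "i \<noteq> z" "i \<noteq> z'" "t \<notin> {i,z,z'}"
      and Pt: "Pc \<Omega> \<B> i z z' t"
    using edge_line[OF D(1-4) e] by blast
  have t: "t \<in> \<Omega> - {i}" "?A z t" "?A z' t" "\<forall>w \<in> \<Omega> - {i,z,z',t}. ?A w t \<longleftrightarrow> (?A w z \<longleftrightarrow> ?A w z')"
    using Pt unfolding Pc_def by auto
  have "\<forall>w \<in> \<Omega> - {i,t}. {i,t,w} \<in> collinear_triples \<Omega> \<B>"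
  proof
    fix w assume w: "w \<in> \<Omega> - {i,t}"
    have "?A w t"
    proof (cases "w = z \<or> w = z'")
      case True thus ?thesis using t adj_sym by metis
    next
      case False
      hence "w \<in> \<Omega> - {i,z,z',t}" "w \<in> \<Omega> - {i,z,z'}" using w by auto
      thus ?thesis using t(4) same by blast
    qed
    thus "{i,t,w} \<in> collinear_triples \<Omega> \<B>" unfolding derived_adj_def by (simp add: insert_commute)
  qed
  thus False using nofull[OF D(1) nl i] t(1) by blast
qed


definition good :: "'a set \<Rightarrow> 'a set multiset \<Rightarrow> nat \<Rightarrow> nat \<Rightarrow> 'a \<Rightarrow> bool" where
  "good \<Omega> \<B> n lam i \<longleftrightarrow> design_2_4 \<Omega> \<B> n lam \<and> supersimple \<B> \<and> prop_triangle \<B> \<and>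
     regular_two_graph \<Omega> (collinear_triples \<Omega> \<B>) \<and> n > 2 * lam + 2 \<and> i \<in> \<Omega>"

definition isoF :: "('a \<Rightarrow> 'b) \<Rightarrow> 'a set \<Rightarrow> 'a set multiset \<Rightarrow> 'a \<Rightarrow> 'b set \<Rightarrow> 'b set multiset \<Rightarrow> 'b \<Rightarrow> bool" where
  "isoF f \<Omega>1 \<B>1 i1 \<Omega>2 \<B>2 i2 \<longleftrightarrow> bij_betw f \<Omega>1 \<Omega>2 \<and> f i1 = i2 \<and>
     (\<forall>x\<in>\<Omega>1-{i1}. \<forall>y\<in>\<Omega>1-{i1}. derived_adj \<Omega>1 \<B>1 i1 x y = derived_adj \<Omega>2 \<B>2 i2 (f x) (f y))"

lemma transfer:
  assumes F: "isoF f \<Omega>1 \<B>1 i1 \<Omega>2 \<B>2 i2" and i: "i1 \<in> \<Omega>1"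
    and ab: "a \<in> \<Omega>1 - {i1}" "b \<in> \<Omega>1 - {i1}" and P: "Pc \<Omega>1 \<B>1 i1 a b z"
  shows "Pc \<Omega>2 \<B>2 i2 (f a) (f b) (f z)"
proof -
  have inj: "inj_on f \<Omega>1" and im: "f ` \<Omega>1 = \<Omega>2" and fi: "f i1 = i2"
    and adj: "\<forall>x\<in>\<Omega>1-{i1}. \<forall>y\<in>\<Omega>1-{i1}. derived_adj \<Omega>1 \<B>1 i1 x y = derived_adj \<Omega>2 \<B>2 i2 (f x) (f y)"
    using F unfolding isoF_def bij_betw_def by auto
  have z: "z \<in> \<Omega>1 - {i1}" "z \<noteq> a" "z \<noteq> b" "derived_adj \<Omega>1 \<B>1 i1 a z" "derived_adj \<Omega>1 \<B>1 i1 b z"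
    "\<forall>w \<in> \<Omega>1 - {i1,a,b,z}. derived_adj \<Omega>1 \<B>1 i1 w z \<longleftrightarrow> (derived_adj \<Omega>1 \<B>1 i1 w a \<longleftrightarrow> derived_adj \<Omega>1 \<B>1 i1 w b)"
    using P unfolding Pc_def by auto
  have fz: "f z \<in> \<Omega>2 - {i2}" using z(1) inj im fi i by (auto dest: inj_onD)
  have fne: "f z \<noteq> f a" "f z \<noteq> f b" using z ab inj by (auto dest: inj_onD)
  have ad: "derived_adj \<Omega>2 \<B>2 i2 (f a) (f z)" "derived_adj \<Omega>2 \<B>2 i2 (f b) (f z)"
    using adj z ab by auto
  have "\<forall>w' \<in> \<Omega>2 - {i2,f a,f b,f z}. derived_adj \<Omega>2 \<B>2 i2 w' (f z) \<longleftrightarrow>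
      (derived_adj \<Omega>2 \<B>2 i2 w' (f a) \<longleftrightarrow> derived_adj \<Omega>2 \<B>2 i2 w' (f b))"
  proof
    fix w' assume w': "w' \<in> \<Omega>2 - {i2,f a,f b,f z}"
    then obtain w where w: "w \<in> \<Omega>1" "w' = f w" using im by auto
    hence w1: "w \<in> \<Omega>1 - {i1,a,b,z}" using w' fi by auto
    hence w2: "w \<in> \<Omega>1 - {i1}" by auto
    show "derived_adj \<Omega>2 \<B>2 i2 w' (f z) \<longleftrightarrow>
      (derived_adj \<Omega>2 \<B>2 i2 w' (f a) \<longleftrightarrow> derived_adj \<Omega>2 \<B>2 i2 w' (f b))"
      using z(6) w1 adj w2 z(1) ab unfolding w(2) by auto
  qed
  thus ?thesis unfolding Pc_def using fz fne ad by blast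
qed

lemma card4E:
  assumes "card L = 4" "i \<in> L"
  shows "\<exists>a b c. L = {i,a,b,c} \<and> i \<noteq> a \<and> i \<noteq> b \<and> i \<noteq> c \<and> a \<noteq> b \<and> a \<noteq> c \<and> b \<noteq> c"
proof -
  have "finite L" using assms(1) by (metis card.infinite zero_neq_numeral)
  hence "card (L - {i}) = 3" using assms by (simp add: card_Diff_singleton)
  then obtain a b c where abc: "L - {i} = {a,b,c}" "a \<noteq> b" "b \<noteq> c" "a \<noteq> c"
    by (auto simp: card_3_iff)
  hence "L = {i,a,b,c}" "i \<notin> {a,b,c}" using assms(2) by blast+
  thus ?thesis using abc by blast
qed

lemma onedir1:
  assumes G1: "good \<Omega>1 \<B>1 n1 lam1 i1" and G2: "good \<Omega>2 \<B>2 n2 lam2 i2"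
    and F: "isoF f \<Omega>1 \<B>1 i1 \<Omega>2 \<B>2 i2"
    and L: "L \<in># \<B>1" "i1 \<in> L"
  shows "f ` L \<in># \<B>2"
proof -
  note D1 = G1[unfolded good_def]
  note D2 = G2[unfolded good_def]
  have inj: "inj_on f \<Omega>1" and im: "f ` \<Omega>1 = \<Omega>2" and fi: "f i1 = i2"
    and adj: "\<forall>x\<in>\<Omega>1-{i1}. \<forall>y\<in>\<Omega>1-{i1}. derived_adj \<Omega>1 \<B>1 i1 x y = derived_adj \<Omega>2 \<B>2 i2 (f x) (f y)"
    using F unfolding isoF_def bij_betw_def by auto
  have Ls: "L \<subseteq> \<Omega>1" "card L = 4" using line_sub D1 L by blast+
  obtain a b c where abc: "L = {i1,a,b,c}" "i1 \<noteq> a" "i1 \<noteq> b" "i1 \<noteq> c" "a \<noteq> b" "a \<noteq> c" "b \<noteq> c"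
    using card4E[OF Ls(2) L(2)] by blast
  have ab: "a \<in> \<Omega>1 - {i1}" "b \<in> \<Omega>1 - {i1}" using Ls abc by auto
  have P1: "Pc \<Omega>1 \<B>1 i1 a b c" by (rule charE[OF _ _ _ _ L(1) abc]) (use D1 in auto)
  have e1: "derived_adj \<Omega>1 \<B>1 i1 a b" unfolding derived_adj_def
    by (rule in_C[OF _ L(1)]) (use D1 abc in auto)
  have P2: "Pc \<Omega>2 \<B>2 i2 (f a) (f b) (f c)" by (rule transfer[OF F _ ab P1]) (use D1 in auto)
  have e2: "derived_adj \<Omega>2 \<B>2 i2 (f a) (f b)" using adj ab e1 by auto
  obtain t L2 where tL: "L2 \<in># \<B>2" "L2 = {i2,f a,f b,t}" and Pt: "Pc \<Omega>2 \<B>2 i2 (f a) (f b) t"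
    using edge_line[OF _ _ _ _ e2] D2 by blast
  have fab: "f a \<in> \<Omega>2 - {i2}" "f b \<in> \<Omega>2 - {i2}" using ab inj im fi D1 by (auto dest: inj_onD)
  have "t = f c" by (rule uniq[OF _ _ _ _ _ _ fab Pt P2]) (use D2 in auto)
  hence "f ` L = L2" using tL abc fi by auto
  thus ?thesis using tL by simp
qed


lemma has_edge:
  assumes G1: "good \<Omega> \<B> n lam i" and L: "L \<in># \<B>" "i \<notin> L"
  shows "\<exists>x y. x \<in> L \<and> y \<in> L \<and> x \<noteq> y \<and> derived_adj \<Omega> \<B> i x y"
proof -
  note D = G1[unfolded good_def]
  have Ls: "L \<subseteq> \<Omega>" "card L = 4" using line_sub D L by blast+
  have "L \<noteq> {}" using Ls by auto
  then obtain a where a: "a \<in> L" by blast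
  obtain b c d where bcd: "L = {a,b,c,d}" "a \<noteq> b" "a \<noteq> c" "a \<noteq> d" "b \<noteq> c" "b \<noteq> d" "c \<noteq> d"
    using card4E[OF Ls(2) a] by blast
  have T: "{a,b,c} \<in> collinear_triples \<Omega> \<B>" by (rule in_C[OF _ L(1)]) (use D bcd in auto)
  have "(({i,a,b}\<in>collinear_triples \<Omega> \<B>) = ({i,a,c}\<in>collinear_triples \<Omega> \<B>)) =
        (({i,b,c}\<in>collinear_triples \<Omega> \<B>) = ({a,b,c}\<in>collinear_triples \<Omega> \<B>))"
    by (rule parity) (use D bcd Ls L in auto)
  hence "{i,a,b}\<in>collinear_triples \<Omega> \<B> \<or> {i,a,c}\<in>collinear_triples \<Omega> \<B> \<or> {i,b,c}\<in>collinear_triples \<Omega> \<B>"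
    using T by blast
  thus ?thesis unfolding derived_adj_def using bcd by blast
qed

lemma onedir:
  assumes G1: "good \<Omega>1 \<B>1 n1 lam1 i1" and G2: "good \<Omega>2 \<B>2 n2 lam2 i2"
    and F: "isoF f \<Omega>1 \<B>1 i1 \<Omega>2 \<B>2 i2"
    and L: "L \<in># \<B>1"
  shows "f ` L \<in># \<B>2"
proof (cases "i1 \<in> L")
  case True thus ?thesis using onedir1[OF G1 G2 F L] by blast
next
  case False
  note D1 = G1[unfolded good_def]
  note D2 = G2[unfolded good_def]
  have inj: "inj_on f \<Omega>1"
    using F unfolding isoF_def bij_betw_def by auto
  have Ls: "L \<subseteq> \<Omega>1" "card L = 4" using line_sub D1 L by blast+
  obtain x y where xy: "x \<in> L" "y \<in> L" "x \<noteq> y" "derived_adj \<Omega>1 \<B>1 i1 x y"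
    using has_edge[OF G1 L False] by blast
  obtain c M where M: "M \<in># \<B>1" "M = {i1,x,y,c}" "i1 \<noteq> x" "i1 \<noteq> y" "c \<notin> {i1,x,y}"
    using edge_line[OF _ _ _ _ xy(4)] D1 by blast
  have Ms: "M \<subseteq> \<Omega>1" "card M = 4" using line_sub D1 M by blast+
  have fL: "finite L" using Ls(2) card_ge_0_finite by force
  have LM: "L \<noteq> M" using M False by blast
  have cL: "c \<notin> L"
  proof
    assume "c \<in> L"
    hence "{x,y,c} \<subseteq> L \<inter> M" using xy M by blast
    hence "card {x,y,c} \<le> card (L \<inter> M)" using fL by (intro card_mono) auto
    moreover have "card (L \<inter> M) \<le> 2" using line_meet[OF _ L M(1) LM] D1 by blast
    moreover have "card {x,y,c} = 3" using xy M by (intro card3) auto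
    ultimately show False by linarith
  qed
  have LiM: "L \<inter> M = {x,y}" using M xy cL False by blast
  hence c2: "card (L \<inter> M) = 2" using xy by simp
  define N where "N = (L - M) \<union> (M - L)"
  have N: "N \<in># \<B>1" using D1 L M(1) c2 unfolding prop_triangle_def N_def by blast
  have iN: "i1 \<in> N" using M False unfolding N_def by blast
  have fM: "f ` M \<in># \<B>2" by (rule onedir1[OF G1 G2 F M(1)]) (use M in simp)
  have fN: "f ` N \<in># \<B>2" by (rule onedir1[OF G1 G2 F N iN])
  have Ns: "N \<subseteq> \<Omega>1" using line_sub D1 N by blast
  have MN: "M \<inter> N = {i1,c}" using M LiM cL False xy unfolding N_def by blast
  have "card (f ` M \<inter> f ` N) = 2"
  proof -
    have "f ` M \<inter> f ` N = f ` (M \<inter> N)" using inj_on_image_Int[OF inj Ms(1) Ns] by simp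
    also have "card \<dots> = card (M \<inter> N)" using inj Ms(1) by (intro card_image) (auto intro: inj_on_subset)
    moreover have "card (M \<inter> N) = 2" unfolding MN using M by auto
    ultimately show ?thesis by simp
  qed
  hence "(f ` M - f ` N) \<union> (f ` N - f ` M) \<in># \<B>2" using D2 fM fN unfolding prop_triangle_def by blast
  moreover have "(f ` M - f ` N) \<union> (f ` N - f ` M) = f ` L"
  proof -
    have "(f ` M - f ` N) = f ` (M - N)" using inj_on_image_set_diff[OF inj _ Ns] Ms by blast
    moreover have "(f ` N - f ` M) = f ` (N - M)" using inj_on_image_set_diff[OF inj _ Ms(1)] Ns by blast
    moreover have "(M - N) \<union> (N - M) = L" unfolding N_def by blast
    ultimately show ?thesis by (simp add: image_Un[symmetric])
  qed
  ultimately show ?thesis by simp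
qed


lemma mset_set_ident: "(\<forall>x\<in>#M. count M x = 1) \<Longrightarrow> mset_set (set_mset M) = M"
proof (rule multiset_eqI)
  fix x assume a: "\<forall>x\<in>#M. count M x = 1"
  show "count (mset_set (set_mset M)) x = count M x"
  proof (cases "x \<in># M")
    case True thus ?thesis using a by simp
  next
    case False thus ?thesis by (simp add: count_eq_zero_iff)
  qed
qed

lemma extend_bij:
  assumes "bij_betw g (A - {a}) (B - {b})" "a \<in> A" "b \<in> B"
  shows "bij_betw (\<lambda>x. if x = a then b else g x) A B"
proof -
  have i: "inj_on g (A - {a})" and im: "g ` (A - {a}) = B - {b}" using assms(1) unfolding bij_betw_def by auto
  show ?thesis unfolding bij_betw_def
  proof
    show "inj_on (\<lambda>x. if x = a then b else g x) A"
    proof (rule inj_onI)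
      fix x y assume xy: "x \<in> A" "y \<in> A" "(if x = a then b else g x) = (if y = a then b else g y)"
      show "x = y"
      proof (cases "x = a"; cases "y = a")
        assume "x \<noteq> a" "y \<noteq> a" thus ?thesis using xy i by (auto dest: inj_onD)
      next
        assume "x = a" "y \<noteq> a" hence "g y \<in> B - {b}" using im xy by blast
        thus ?thesis using xy \<open>x = a\<close> \<open>y \<noteq> a\<close> by auto
      next
        assume "x \<noteq> a" "y = a" hence "g x \<in> B - {b}" using im xy by blast
        thus ?thesis using xy \<open>x \<noteq> a\<close> \<open>y = a\<close> by auto
      qed simp
    qed
    show "(\<lambda>x. if x = a then b else g x) ` A = B"
    proof
      show "(\<lambda>x. if x = a then b else g x) ` A \<subseteq> B" using im assms(3) by auto
      show "B \<subseteq> (\<lambda>x. if x = a then b else g x) ` A"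
      proof
        fix y assume y: "y \<in> B"
        show "y \<in> (\<lambda>x. if x = a then b else g x) ` A"
        proof (cases "y = b")
          case True thus ?thesis using assms(2) by (auto intro: image_eqI[where x=a])
        next
          case False
          then obtain x where "x \<in> A - {a}" "y = g x" using im y by blast
          thus ?thesis by (auto intro: image_eqI[where x=x])
        qed
      qed
    qed
  qed
qed

theorem lemma6p5:
  fixes \<Omega>1 :: "'a set" and \<B>1 :: "'a set multiset" and n1 lam1 :: nat and i1 :: 'a
    and \<Omega>2 :: "'b set" and \<B>2 :: "'b set multiset" and n2 lam2 :: nat and i2 :: 'b
  assumes D1: "design_2_4 \<Omega>1 \<B>1 n1 lam1" "supersimple \<B>1" "prop_triangle \<B>1"
      "regular_two_graph \<Omega>1 (collinear_triples \<Omega>1 \<B>1)" "n1 > 2 * lam1 + 2"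
    and D2: "design_2_4 \<Omega>2 \<B>2 n2 lam2" "supersimple \<B>2" "prop_triangle \<B>2"
      "regular_two_graph \<Omega>2 (collinear_triples \<Omega>2 \<B>2)" "n2 > 2 * lam2 + 2"
    and inf: "i1 \<in> \<Omega>1" "i2 \<in> \<Omega>2"
    and iso: "derived_graphs_iso \<Omega>1 \<B>1 i1 \<Omega>2 \<B>2 i2"
  shows "designs_iso \<Omega>1 \<B>1 \<Omega>2 \<B>2"
proof -
  have G1: "good \<Omega>1 \<B>1 n1 lam1 i1" using D1 inf unfolding good_def by blast
  have G2: "good \<Omega>2 \<B>2 n2 lam2 i2" using D2 inf unfolding good_def by blast
  obtain g where g: "bij_betw g (\<Omega>1 - {i1}) (\<Omega>2 - {i2})"
    "\<forall>a\<in>\<Omega>1 - {i1}. \<forall>b\<in>\<Omega>1 - {i1}. derived_adj \<Omega>1 \<B>1 i1 a b = derived_adj \<Omega>2 \<B>2 i2 (g a) (g b)"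
    using iso unfolding derived_graphs_iso_def graph_iso_def by blast
  define f where "f = (\<lambda>x. if x = i1 then i2 else g x)"
  have bf: "bij_betw f \<Omega>1 \<Omega>2" unfolding f_def by (rule extend_bij[OF g(1) inf])
  have F: "isoF f \<Omega>1 \<B>1 i1 \<Omega>2 \<B>2 i2"
    unfolding isoF_def using bf g(2) by (auto simp: f_def)
  have inj: "inj_on f \<Omega>1" and im: "f ` \<Omega>1 = \<Omega>2" using bf unfolding bij_betw_def by auto
  define h where "h = the_inv_into \<Omega>1 f"
  have bh: "bij_betw h \<Omega>2 \<Omega>1" unfolding h_def by (rule bij_betw_the_inv_into[OF bf])
  have fh: "\<And>y. y \<in> \<Omega>2 \<Longrightarrow> f (h y) = y" unfolding h_def using f_the_inv_into_f[OF inj] im by blast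
  have hf: "\<And>x. x \<in> \<Omega>1 \<Longrightarrow> h (f x) = x" unfolding h_def using the_inv_into_f_f[OF inj] by blast
  have fi: "f i1 = i2" unfolding f_def by simp
  have hi: "h i2 = i1" using hf[OF inf(1)] fi by simp
  have H: "isoF h \<Omega>2 \<B>2 i2 \<Omega>1 \<B>1 i1"
    unfolding isoF_def
  proof (intro conjI bh hi ballI)
    fix x y assume xy: "x \<in> \<Omega>2 - {i2}" "y \<in> \<Omega>2 - {i2}"
    have hx: "h x \<in> \<Omega>1 - {i1}" "h y \<in> \<Omega>1 - {i1}" using xy bh fh fi unfolding bij_betw_def by force+
    show "derived_adj \<Omega>2 \<B>2 i2 x y = derived_adj \<Omega>1 \<B>1 i1 (h x) (h y)"
      using F hx fh xy unfolding isoF_def by auto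
  qed
  have eqs: "set_mset \<B>2 = image f ` set_mset \<B>1"
  proof
    show "image f ` set_mset \<B>1 \<subseteq> set_mset \<B>2" using onedir[OF G1 G2 F] by auto
    show "set_mset \<B>2 \<subseteq> image f ` set_mset \<B>1"
    proof
      fix L assume L: "L \<in> set_mset \<B>2"
      hence "h ` L \<in># \<B>1" using onedir[OF G2 G1 H] by auto
      moreover have "f ` (h ` L) = L"
      proof -
        have "L \<subseteq> \<Omega>2" using line_sub[OF D2(1)] L by blast
        thus ?thesis using fh by (force simp: image_image)
      qed
      ultimately show "L \<in> image f ` set_mset \<B>1" by (metis image_eqI)
    qed
  qed
  have injP: "inj_on (image f) (set_mset \<B>1)"
  proof (rule inj_on_subset[OF inj_on_image_Pow[OF inj]])
    show "set_mset \<B>1 \<subseteq> Pow \<Omega>1" using line_sub[OF D1(1)] by blast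
  qed
  have m1: "mset_set (set_mset \<B>1) = \<B>1" using D1(2) unfolding supersimple_def by (intro mset_set_ident) blast
  have m2: "mset_set (set_mset \<B>2) = \<B>2" using D2(2) unfolding supersimple_def by (intro mset_set_ident) blast
  have "image_mset (image f) \<B>1 = \<B>2"
  proof -
    have "image_mset (image f) \<B>1 = image_mset (image f) (mset_set (set_mset \<B>1))" using m1 by simp
    also have "\<dots> = mset_set (image f ` set_mset \<B>1)" by (rule image_mset_mset_set[OF injP])
    also have "\<dots> = \<B>2" using eqs m2 by simp
    finally show ?thesis .
  qed
  thus ?thesis unfolding designs_iso_def using bf by blast
qed

end
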